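(* Let $F$ be a field with $\mathrm{char}\,F\ne2$ and let $A$ be an involutive $F$-algebra. Then $A$ is reversible if and only if every $3$-dimensional subalgebra of $A$ is commutative.
   Context: Algebras are unital, with bilinear not necessarily associative multiplication. $A$ is involutive if there is an anti-automorphism $a\mapsto\bar a$ with $\bar{\bar a}=a$, $a+\bar a\in F1$ and $a\bar a\in F1$ for all $a\in A$. $A$ is reversible if $ab=0$ implies $ba=0$ for all $a,b\in A$. *)

theory Defs
  imports Complex_Main
begin

definition unital_algebra ::
  "('k::field \<Rightarrow> 'a::ab_group_add \<Rightarrow> 'a) \<Rightarrow> ('a \<Rightarrow> 'a \<Rightarrow> 'a) \<Rightarrow> 'a \<Rightarrow> bool" where
  "unital_algebra scale mult one \<longleftrightarrow>
     Vector_Spaces.vector_space scale \<and>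
     (\<forall>x y z. mult (x + y) z = mult x z + mult y z) \<and>
     (\<forall>x y z. mult x (y + z) = mult x y + mult x z) \<and>
     (\<forall>c x y. mult (scale c x) y = scale c (mult x y)) \<and>
     (\<forall>c x y. mult x (scale c y) = scale c (mult x y)) \<and>
     (\<forall>x. mult one x = x \<and> mult x one = x)"

definition is_involution ::
  "('k::field \<Rightarrow> 'a::ab_group_add \<Rightarrow> 'a) \<Rightarrow> ('a \<Rightarrow> 'a \<Rightarrow> 'a) \<Rightarrow> 'a \<Rightarrow> ('a \<Rightarrow> 'a) \<Rightarrow> bool" where
  "is_involution scale mult one bar \<longleftrightarrow>
     (\<forall>x y. bar (x + y) = bar x + bar y) \<and>
     (\<forall>c x. bar (scale c x) = scale c (bar x)) \<and>
     bij bar \<and>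
     (\<forall>x y. bar (mult x y) = mult (bar y) (bar x)) \<and>
     (\<forall>x. bar (bar x) = x) \<and>
     (\<forall>x. \<exists>c. x + bar x = scale c one) \<and>
     (\<forall>x. \<exists>c. mult x (bar x) = scale c one)"

definition involutive_algebra ::
  "('k::field \<Rightarrow> 'a::ab_group_add \<Rightarrow> 'a) \<Rightarrow> ('a \<Rightarrow> 'a \<Rightarrow> 'a) \<Rightarrow> 'a \<Rightarrow> bool" where
  "involutive_algebra scale mult one \<longleftrightarrow>
     unital_algebra scale mult one \<and> (\<exists>bar. is_involution scale mult one bar)"

definition reversible :: "('a::zero \<Rightarrow> 'a \<Rightarrow> 'a) \<Rightarrow> bool" where
  "reversible mult \<longleftrightarrow> (\<forall>a b. mult a b = 0 \<longrightarrow> mult b a = 0)"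

definition subalgebra ::
  "('k::field \<Rightarrow> 'a::ab_group_add \<Rightarrow> 'a) \<Rightarrow> ('a \<Rightarrow> 'a \<Rightarrow> 'a) \<Rightarrow> 'a \<Rightarrow> 'a set \<Rightarrow> bool" where
  "subalgebra scale mult one B \<longleftrightarrow>
     Modules.module.subspace scale B \<and> one \<in> B \<and> (\<forall>x\<in>B. \<forall>y\<in>B. mult x y \<in> B)"

definition commutative_on :: "('a \<Rightarrow> 'a \<Rightarrow> 'a) \<Rightarrow> 'a set \<Rightarrow> bool" where
  "commutative_on mult B \<longleftrightarrow> (\<forall>x\<in>B. \<forall>y\<in>B. mult x y = mult y x)"

end

theory Submission imports Defs begin

locale ialg = vector_space scale
  for scale :: "'k::field \<Rightarrow> 'a::ab_group_add \<Rightarrow> 'a" (infixr "*s" 75) +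
  fixes mult :: "'a \<Rightarrow> 'a \<Rightarrow> 'a" (infixl "\<odot>" 70) and one :: 'a and bar :: "'a \<Rightarrow> 'a"
  assumes ladd: "(x + y) \<odot> z = x \<odot> z + y \<odot> z"
    and radd: "x \<odot> (y + z) = x \<odot> y + x \<odot> z"
    and lsc: "(c *s x) \<odot> y = c *s (x \<odot> y)"
    and rsc: "x \<odot> (c *s y) = c *s (x \<odot> y)"
    and onel: "one \<odot> x = x" and oner: "x \<odot> one = x"
    and bar_add: "bar (x + y) = bar x + bar y"
    and bar_sc: "bar (c *s x) = c *s bar x"
    and bar_mult: "bar (x \<odot> y) = bar y \<odot> bar x"
    and bar_bar: "bar (bar x) = x"
    and trace: "\<exists>c. x + bar x = c *s one"
    and norm: "\<exists>c. x \<odot> bar x = c *s one"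
begin

lemma mult_0l[simp]: "0 \<odot> y = 0"
proof -
  have "0 \<odot> y = 0 \<odot> y + 0 \<odot> y" using ladd[of 0 0 y] by simp
  then show ?thesis by simp
qed
lemma mult_0r[simp]: "y \<odot> 0 = 0"
proof -
  have "y \<odot> 0 = y \<odot> 0 + y \<odot> 0" using radd[of y 0 0] by simp
  then show ?thesis by simp
qed
lemma mult_negl: "(- x) \<odot> y = - (x \<odot> y)"
proof -
  have "x \<odot> y + (-x) \<odot> y = 0" using ladd[of x "-x" y] by simp
  then show ?thesis by (rule minus_unique[symmetric])
qed
lemma mult_negr: "y \<odot> (- x) = - (y \<odot> x)"
proof -
  have "y \<odot> x + y \<odot> (-x) = 0" using radd[of y x "-x"] by simp
  then show ?thesis by (rule minus_unique[symmetric])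
qed
lemma mult_diffl: "(x - z) \<odot> y = x \<odot> y - z \<odot> y"
  by (simp only: diff_conv_add_uminus ladd mult_negl)
lemma mult_diffr: "y \<odot> (x - z) = y \<odot> x - y \<odot> z"
  by (simp only: diff_conv_add_uminus radd mult_negr)

lemmas mult_simps = ladd radd lsc rsc onel oner mult_negl mult_negr mult_diffl mult_diffr

lemma bar_0[simp]: "bar 0 = 0"
proof -
  have "bar 0 = bar 0 + bar 0" using bar_add[of 0 0] by simp
  then show ?thesis by simp
qed
lemma bar_neg: "bar (- x) = - bar x"
proof -
  have "bar x + bar (-x) = 0" using bar_add[of x "-x"] by simp
  then show ?thesis by (rule minus_unique[symmetric])
qed
lemma bar_diff: "bar (x - y) = bar x - bar y"
  by (simp only: diff_conv_add_uminus bar_add bar_neg)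
lemma bar_one: "bar one = one"
proof -
  have "bar one \<odot> x = x" for x
    using bar_mult[of "bar x" one] by (simp add: bar_bar oner)
  from this[of one] show ?thesis by (simp add: oner)
qed
lemma bar_scone: "bar (c *s one) = c *s one"
  by (simp add: bar_sc bar_one)

definition V3 :: "'a \<Rightarrow> 'a \<Rightarrow> 'k \<Rightarrow> 'k \<Rightarrow> 'k \<Rightarrow> 'a" where
  "V3 x y a b c = a *s one + b *s x + c *s y"

lemma V3_add: "V3 x y a b c + V3 x y d e f = V3 x y (a+d) (b+e) (c+f)"
  by (simp add: V3_def scale_left_distrib add_ac)
lemma V3_sc: "k *s V3 x y a b c = V3 x y (k*a) (k*b) (k*c)"
  by (simp add: V3_def scale_right_distrib)
lemma V3_cong: "a = a' \<Longrightarrow> b = b' \<Longrightarrow> c = c' \<Longrightarrow> V3 x y a b c = V3 x y a' b' c'"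
  by simp
lemma V3_multl: "V3 x y a b c \<odot> w = a *s (one \<odot> w) + b *s (x \<odot> w) + c *s (y \<odot> w)"
  by (simp add: V3_def ladd lsc)
lemma V3_multr: "w \<odot> V3 x y a b c = a *s (w \<odot> one) + b *s (w \<odot> x) + c *s (w \<odot> y)"
  by (simp add: V3_def radd rsc)
lemma V3_one: "one = V3 x y 1 0 0" and V3_x: "x = V3 x y 0 1 0" and V3_y: "y = V3 x y 0 0 1"
  by (simp_all add: V3_def)

lemma V3_prod:
  assumes xx: "x \<odot> x = A *s one" and yy: "y \<odot> y = Bb *s one"
    and xy: "x \<odot> y = V3 x y \<alpha> \<beta> \<gamma>" and yx: "y \<odot> x = V3 x y \<alpha> (-\<beta>) (-\<gamma>)"
  shows "V3 x y l p q \<odot> V3 x y m r t = V3 x y (l*m + p*r*A + q*t*Bb + (p*t+q*r)*\<alpha>)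
     (l*r + m*p + (p*t - q*r)*\<beta>) (l*t + m*q + (p*t-q*r)*\<gamma>)"
proof -
  have xx': "x \<odot> x = V3 x y A 0 0" using xx by (simp add: V3_def)
  have yy': "y \<odot> y = V3 x y Bb 0 0" using yy by (simp add: V3_def)
  have o1: "one \<odot> one = V3 x y 1 0 0" "one \<odot> x = V3 x y 0 1 0" "one \<odot> y = V3 x y 0 0 1"
     "x \<odot> one = V3 x y 0 1 0" "y \<odot> one = V3 x y 0 0 1"
    by (simp_all add: onel oner V3_def)
  show ?thesis
    apply (simp add: V3_multl V3_multr o1 xx' yy' xy yx V3_sc V3_add)
    apply (rule V3_cong) apply (simp_all add: algebra_simps)
    done
qed

lemma V3_zero: "V3 x y 0 0 0 = 0" by (simp add: V3_def)

lemma keyK: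
  assumes rev: "\<forall>u v. u \<odot> v = 0 \<longrightarrow> v \<odot> u = 0" and two: "(2::'k) \<noteq> 0"
    and ind: "\<forall>a b c. V3 x y a b c = 0 \<longrightarrow> a = 0 \<and> b = 0 \<and> c = 0"
    and xx: "x \<odot> x = A *s one" and yy: "y \<odot> y = Bb *s one"
    and xy: "x \<odot> y = V3 x y \<alpha> \<beta> \<gamma>" and yx: "y \<odot> x = V3 x y \<alpha> (-\<beta>) (-\<gamma>)"
  shows "\<beta> = 0 \<and> \<gamma> = 0"
proof -
  have gen: "\<beta> = 0 \<and> \<gamma> = 0" if E: "(A - \<gamma>^2)*p*r + (\<alpha>+\<beta>*\<gamma>)*(p*t+q*r) + (Bb - \<beta>^2)*q*t = 0"
    and D: "p*t - q*r \<noteq> 0" for p q r t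
  proof -
    define u where "u = V3 x y (\<beta>*q - \<gamma>*p) p q"
    define v where "v = V3 x y (\<gamma>*r - \<beta>*t) r t"
    have "u \<odot> v = V3 x y 0 0 0"
      unfolding u_def v_def V3_prod[OF xx yy xy yx]
      apply (rule V3_cong)
      using E by (simp_all add: algebra_simps power2_eq_square)
    then have "u \<odot> v = 0" by (simp add: V3_zero)
    then have "v \<odot> u = 0" using rev by blast
    then have "V3 x y ((\<gamma>*r - \<beta>*t)*(\<beta>*q - \<gamma>*p) + r*p*A + t*q*Bb + (r*q+t*p)*\<alpha>)
     ((\<gamma>*r - \<beta>*t)*p + (\<beta>*q - \<gamma>*p)*r + (r*q - t*p)*\<beta>) ((\<gamma>*r - \<beta>*t)*q + (\<beta>*q - \<gamma>*p)*t + (r*q-t*p)*\<gamma>) = 0"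
      unfolding u_def v_def V3_prod[OF xx yy xy yx] .
    then have c1: "(\<gamma>*r - \<beta>*t)*p + (\<beta>*q - \<gamma>*p)*r + (r*q - t*p)*\<beta> = 0"
      and c2: "(\<gamma>*r - \<beta>*t)*q + (\<beta>*q - \<gamma>*p)*t + (r*q-t*p)*\<gamma> = 0"
      using ind by blast+
    have "2 * (p*t - q*r) * \<beta> = 0" using c1 by algebra
    moreover have "2 * (p*t - q*r) * \<gamma> = 0" using c2 by algebra
    ultimately show ?thesis using two D by simp
  qed
  show ?thesis
  proof (cases "A - \<gamma>^2 \<noteq> 0")
    case True
    show ?thesis
      by (rule gen[where p=1 and q=0 and r="-(\<alpha>+\<beta>*\<gamma>)" and t="A - \<gamma>^2"]) (use True in \<open>simp_all add: algebra_simps\<close>)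
  next
    case F1: False
    show ?thesis
    proof (cases "Bb - \<beta>^2 \<noteq> 0")
      case True
      show ?thesis
        by (rule gen[where p=0 and q=1 and r="Bb - \<beta>^2" and t="-(\<alpha>+\<beta>*\<gamma>)"]) (use True in \<open>simp_all add: algebra_simps\<close>)
    next
      case False
      show ?thesis
        by (rule gen[where p=1 and q=1 and r=1 and t="-1"]) (use False F1 two in \<open>simp_all add: algebra_simps\<close>)
    qed
  qed
qed

lemma centering:
  assumes two: "(2::'k) \<noteq> 0"
  shows "\<exists>c x'. x = c *s one + x' \<and> bar x' = - x'"
proof -
  obtain t where t: "x + bar x = t *s one" using trace by blast
  define x' where "x' = x - (t/2) *s one"
  have bx: "bar x = t *s one - x" using t by (simp add: algebra_simps)
  have "bar x' = bar x - (t/2) *s one" by (simp add: x'_def bar_diff bar_scone)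
  also have "\<dots> = (t - t/2) *s one - x" by (simp add: bx scale_left_diff_distrib)
  also have "t - t/2 = t/2" using two by (simp add: field_simps)
  finally have "bar x' = - x'" by (simp add: x'_def)
  moreover have "x = (t/2) *s one + x'" by (simp add: x'_def)
  ultimately show ?thesis by blast
qed

lemma pure_sq: "bar x = - x \<Longrightarrow> \<exists>A. x \<odot> x = A *s one"
proof -
  assume b: "bar x = - x"
  obtain n where "x \<odot> bar x = n *s one" using norm by blast
  then have "- (x \<odot> x) = n *s one" using b by (simp add: mult_negr)
  then have "x \<odot> x = - (n *s one)" by (metis minus_minus)
  then have "x \<odot> x = (-n) *s one" by simp
  then show ?thesis by blast
qed

lemma comm_span1: "(a *s one + b *s z) \<odot> (c *s one + d *s z) = (c *s one + d *s z) \<odot> (a *s one + b *s z)"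
  by (simp add: ladd radd lsc rsc onel oner algebra_simps)

lemma comm_shift: "x \<odot> y = y \<odot> x \<Longrightarrow> (c *s one + x) \<odot> (d *s one + y) = (d *s one + y) \<odot> (c *s one + x)"
  by (simp add: ladd radd lsc rsc onel oner algebra_simps)

lemma one0: "one = 0 \<Longrightarrow> x = (0::'a)"
  using onel[of x] by simp

lemma span_mult_closed:
  assumes G: "\<forall>e\<in>G. \<forall>f\<in>G. e \<odot> f \<in> span G" and u: "u \<in> span G" and v: "v \<in> span G"
  shows "u \<odot> v \<in> span G"
  using u
proof (induction rule: span_induct_alt)
  case base then show ?case by (simp add: span_zero)
next
  case (step c e w)
  have "e \<odot> v \<in> span G" using v
  proof (induction rule: span_induct_alt)
    case base then show ?case by (simp add: span_zero)
  next
    case (step c' f w')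
    then show ?case using G \<open>e \<in> G\<close> by (simp add: radd rsc span_add span_scale)
  qed
  then show ?case using step by (simp add: ladd lsc span_add span_scale)
qed

lemma span_bar_closed:
  assumes G: "\<forall>g\<in>G. bar g \<in> span G" and u: "u \<in> span G"
  shows "bar u \<in> span G"
  using u
proof (induction rule: span_induct_alt)
  case base then show ?case by (simp add: span_zero)
next
  case (step c e w)
  then show ?case using G by (simp add: bar_add bar_sc span_add span_scale)
qed

lemma span3_coeffs:
  assumes "z \<in> span (insert y (insert x {one}))"
  shows "\<exists>a b c. z = V3 x y a b c"
proof -
  obtain k where k: "z - k *s y \<in> span (insert x {one})" using assms by (auto simp: span_insert)
  then obtain k' where k': "z - k *s y - k' *s x \<in> span {one}" by (auto simp: span_insert)
  then obtain k'' where "z - k *s y - k' *s x = k'' *s one" by (auto simp: span_singleton)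
  then have "z = V3 x y k'' k' k" by (simp add: V3_def algebra_simps)
  then show ?thesis by blast
qed

lemma V3_in_span: "V3 x y a b c \<in> span (insert y (insert x {one}))"
  by (simp add: V3_def span_add span_scale span_base)

lemma indep3:
  assumes o: "one \<noteq> 0" and x: "x \<notin> span {one}" and y: "y \<notin> span (insert x {one})"
  shows "independent (insert y (insert x {one}))" "card (insert y (insert x {one})) = 3"
    "\<forall>a b c. V3 x y a b c = 0 \<longrightarrow> a = 0 \<and> b = 0 \<and> c = 0"
proof -
  have "independent {one}" using o independent_empty by (intro independent_insertI) auto
  then have "independent (insert x {one})" by (rule independent_insertI[OF x])
  then show "independent (insert y (insert x {one}))" by (rule independent_insertI[OF y])
  have "x \<noteq> one" using x by (auto intro: span_base)
  moreover have "y \<noteq> x" "y \<noteq> one" using y by (auto intro: span_base)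
  ultimately show "card (insert y (insert x {one})) = 3" by simp
  show "\<forall>a b c. V3 x y a b c = 0 \<longrightarrow> a = 0 \<and> b = 0 \<and> c = 0"
  proof (intro allI impI)
    fix a b c assume V: "V3 x y a b c = 0"
    have c: "c = 0"
    proof (rule ccontr)
      assume "c \<noteq> 0"
      have "(a *s one + b *s x) + c *s y = 0" using V unfolding V3_def .
      then have "c *s y = - (a *s one + b *s x)" by (metis add_eq_0_iff)
      then have "y = (1/c) *s (- (a *s one + b *s x))" using \<open>c \<noteq> 0\<close>
        by (metis scale_one scale_scale divide_inverse_commute divide_self_if mult.commute)
      then have "y \<in> span (insert x {one})"
        by (simp add: span_diff span_scale span_base span_neg)
      then show False using y by blast
    qed
    have b: "b = 0"
    proof (rule ccontr)
      assume "b \<noteq> 0"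
      have "a *s one + b *s x = 0" using V c unfolding V3_def by simp
      then have "b *s x = - (a *s one)" by (metis add_eq_0_iff)
      then have "x = (1/b) *s (- (a *s one))" using \<open>b \<noteq> 0\<close>
        by (metis scale_one scale_scale divide_inverse_commute divide_self_if mult.commute)
      then have "x \<in> span {one}"
        by (simp add: span_scale span_base span_neg)
      then show False using x by blast
    qed
    have "a *s one = 0" using V b c by (simp add: V3_def)
    then have "a = 0" using o by simp
    then show "a = 0 \<and> b = 0 \<and> c = 0" using b c by simp
  qed
qed

lemma bar_form: "\<exists>t. bar a = t *s one - a"
proof -
  obtain t where "a + bar a = t *s one" using trace by blast
  then have "bar a = t *s one - a" by (simp add: algebra_simps)
  then show ?thesis by blast
qed

lemma dependent_cases:
  assumes "one = 0 \<or> x \<in> span {one} \<or> y \<in> span (insert x {one})"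
  shows "x \<odot> y = y \<odot> x"
  using assms
proof (elim disjE)
  assume "one = 0" then have "x = 0" by (rule one0) then show ?thesis by simp
next
  assume "x \<in> span {one}"
  then obtain k where k: "x = k *s one" by (auto simp: span_singleton)
  have "(k *s one + 0 *s y) \<odot> (0 *s one + 1 *s y) = (0 *s one + 1 *s y) \<odot> (k *s one + 0 *s y)"
    by (rule comm_span1)
  then show ?thesis using k by simp
next
  assume "y \<in> span (insert x {one})"
  then obtain k where "y - k *s x \<in> span {one}" by (auto simp: span_insert)
  then obtain k' where "y - k *s x = k' *s one" by (auto simp: span_singleton)
  then have k: "y = k' *s one + k *s x" by (simp add: algebra_simps)
  have "(0 *s one + 1 *s x) \<odot> (k' *s one + k *s x) = (k' *s one + k *s x) \<odot> (0 *s one + 1 *s x)"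
    by (rule comm_span1)
  then show ?thesis using k by simp
qed

lemma fwd:
  assumes two: "(2::'k) \<noteq> 0" and rev: "\<forall>u v. u \<odot> v = 0 \<longrightarrow> v \<odot> u = 0"
    and sub: "subspace B" and oneB: "one \<in> B" and cl: "\<forall>x\<in>B. \<forall>y\<in>B. x \<odot> y \<in> B"
    and dm: "dim B = 3" and p: "p \<in> B" and q: "q \<in> B"
  shows "p \<odot> q = q \<odot> p"
proof -
  obtain c x where px: "p = c *s one + x" and bx: "bar x = - x" using centering[OF two] by blast
  obtain d y where qy: "q = d *s one + y" and bY: "bar y = - y" using centering[OF two] by blast
  have "x = p - c *s one" using px by simp
  then have xB: "x \<in> B" using sub p oneB by (simp add: subspace_diff subspace_scale)
  have "y = q - d *s one" using qy by simp
  then have yB: "y \<in> B" using sub q oneB by (simp add: subspace_diff subspace_scale)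
  have "x \<odot> y = y \<odot> x"
  proof (cases "one = 0 \<or> x \<in> span {one} \<or> y \<in> span (insert x {one})")
    case True then show ?thesis by (rule dependent_cases)
  next
    case False
    then have o: "one \<noteq> 0" and nx: "x \<notin> span {one}" and ny: "y \<notin> span (insert x {one})" by auto
    note I = indep3[OF o nx ny]
    let ?S = "insert y (insert x {one})"
    have SB: "?S \<subseteq> B" using xB yB oneB by auto
    have BS: "B \<subseteq> span ?S"
    proof
      fix z assume zB: "z \<in> B"
      show "z \<in> span ?S"
      proof (rule ccontr)
        assume zS: "z \<notin> span ?S"
        obtain Bs where Bs: "Bs \<subseteq> B" "independent Bs" "B \<subseteq> span Bs" "card Bs = dim B"
          by (rule basis_exists)
        have fin: "finite Bs" using Bs(4) dm card.infinite by force
        have "independent (insert z ?S)" by (rule independent_insertI[OF zS I(1)])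
        moreover have "insert z ?S \<subseteq> span Bs" using SB zB Bs(3) by blast
        ultimately have le: "card (insert z ?S) \<le> card Bs" using independent_span_bound[OF fin] by blast
        have zn: "z \<notin> ?S"
        proof
          assume "z \<in> ?S" then have "z \<in> span ?S" by (rule span_base)
          with zS show False by blast
        qed
        have "card (insert z ?S) = Suc (card ?S)" by (rule card_insert_disjoint[OF _ zn]) simp
        then have "card (insert z ?S) = 4" using I(2) by simp
        then show False using le Bs(4) dm by simp
      qed
    qed
    have "x \<odot> y \<in> span ?S" using cl xB yB BS by blast
    then obtain \<alpha> \<beta> \<gamma> where xy: "x \<odot> y = V3 x y \<alpha> \<beta> \<gamma>" using span3_coeffs by blast
    have yx: "y \<odot> x = V3 x y \<alpha> (-\<beta>) (-\<gamma>)"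
    proof -
      have "bar (x \<odot> y) = y \<odot> x" using bar_mult[of x y] bx bY by (simp add: mult_negl mult_negr)
      moreover have "bar (x \<odot> y) = V3 x y \<alpha> (-\<beta>) (-\<gamma>)"
        by (simp add: xy V3_def bar_add bar_sc bar_one bx bY)
      ultimately show ?thesis by simp
    qed
    obtain A where xx: "x \<odot> x = A *s one" using pure_sq[OF bx] by blast
    obtain Bb where yy: "y \<odot> y = Bb *s one" using pure_sq[OF bY] by blast
    have "\<beta> = 0 \<and> \<gamma> = 0" by (rule keyK[OF rev two I(3) xx yy xy yx])
    then show ?thesis using xy yx by simp
  qed
  then show ?thesis unfolding px qy by (rule comm_shift)
qed

lemma bwd:
  assumes H: "\<forall>B. subspace B \<and> one \<in> B \<and> (\<forall>x\<in>B. \<forall>y\<in>B. x \<odot> y \<in> B) \<and> dim B = 3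
       \<longrightarrow> (\<forall>x\<in>B. \<forall>y\<in>B. x \<odot> y = y \<odot> x)"
    and ab: "a \<odot> b = 0"
  shows "b \<odot> a = 0"
proof -
  have "a \<odot> b = b \<odot> a"
  proof (cases "one = 0 \<or> a \<in> span {one} \<or> b \<in> span (insert a {one})")
    case True then show ?thesis by (rule dependent_cases)
  next
    case False
    then have o: "one \<noteq> 0" and na: "a \<notin> span {one}" and nb: "b \<notin> span (insert a {one})" by auto
    note I = indep3[OF o na nb]
    let ?S = "insert b (insert a {one})"
    have oS: "one \<in> span ?S" and aS: "a \<in> span ?S" and bS: "b \<in> span ?S" by (auto intro: span_base)
    obtain ta where ta: "bar a = ta *s one - a" using bar_form by blast
    obtain tb where tb: "bar b = tb *s one - b" using bar_form by blast
    have baS: "bar a \<in> span ?S" using ta oS aS by (simp add: span_diff span_scale)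
    have bbS: "bar b \<in> span ?S" using tb oS bS by (simp add: span_diff span_scale)
    have sq: "e \<odot> e \<in> span ?S" if eS: "e \<in> span ?S" for e
    proof -
      obtain t where t: "bar e = t *s one - e" using bar_form by blast
      obtain n where n: "e \<odot> bar e = n *s one" using norm by blast
      have "e \<odot> e = t *s e - n *s one" using n t by (simp add: mult_diffr rsc oner algebra_simps)
      then show ?thesis using eS oS by (simp add: span_diff span_scale)
    qed
    have ba: "b \<odot> a \<in> span ?S"
    proof -
      have "b \<odot> a = bar (bar a \<odot> bar b)" using bar_mult[of "bar a" "bar b"] by (simp add: bar_bar)
      moreover have "bar a \<odot> bar b = (ta*tb) *s one - ta *s b - tb *s a"
        unfolding ta tb using ab by (simp add: mult_diffl mult_diffr lsc rsc onel oner algebra_simps)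
      moreover have "(ta*tb) *s one - ta *s b - tb *s a \<in> span ?S"
        using oS aS bS by (simp add: span_diff span_scale)
      moreover have "\<forall>g\<in>?S. bar g \<in> span ?S" using baS bbS oS by (simp add: bar_one)
      ultimately show ?thesis using span_bar_closed by metis
    qed
    have G: "\<forall>e\<in>?S. \<forall>f\<in>?S. e \<odot> f \<in> span ?S"
      using sq[OF aS] sq[OF bS] ba ab aS bS oS by (auto simp: onel oner span_zero)
    have "dim (span ?S) = 3" using dim_span_eq_card_independent[OF I(1)] I(2) by simp
    then have "\<forall>x\<in>span ?S. \<forall>y\<in>span ?S. x \<odot> y = y \<odot> x"
      using H span_mult_closed[OF G] oS by blast
    then show ?thesis using aS bS by blast
  qed
  then show ?thesis using ab by simp
qed

end

theorem proposition4p9: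
  fixes scale :: "'k::field \<Rightarrow> 'a::ab_group_add \<Rightarrow> 'a"
    and mult :: "'a \<Rightarrow> 'a \<Rightarrow> 'a"
    and one :: 'a
  assumes char: "(2::'k) \<noteq> 0"
    and inv: "involutive_algebra scale mult one"
  shows "reversible mult \<longleftrightarrow>
    (\<forall>B. subalgebra scale mult one B \<and> Vector_Spaces.vector_space.dim scale B = 3
         \<longrightarrow> commutative_on mult B)"
proof -
  obtain bar where U: "unital_algebra scale mult one" and I: "is_involution scale mult one bar"
    using inv unfolding involutive_algebra_def by blast
  interpret ialg scale mult one bar
    using U I unfolding unital_algebra_def is_involution_def ialg_def ialg_axioms_def by auto
  show ?thesis
  proof
    assume r: "reversible mult"
    show "\<forall>B. subalgebra scale mult one B \<and> dim B = 3 \<longrightarrow> commutative_on mult B"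
      using fwd[OF char] r unfolding reversible_def subalgebra_def commutative_on_def by blast
  next
    assume H: "\<forall>B. subalgebra scale mult one B \<and> dim B = 3 \<longrightarrow> commutative_on mult B"
    show "reversible mult"
      unfolding reversible_def
      using bwd H unfolding subalgebra_def commutative_on_def by blast
  qed
qed

end
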